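(* Let $d,\mathfrak d,\mathfrak L\in\mathbb N$, $L\in\mathbb R$, $u\in[-\infty,\infty)$, $v\in(u,\infty]$, let $D\subseteq\mathbb R^d$ be a set, let $f\colon D\to[u,v]\cap\mathbb R$ satisfy $|f(x)-f(y)|\le L\sum_{i=1}^d|x_i-y_i|$ for all $x,y\in D$, let $\mathcal M\subseteq D$ satisfy $|\mathcal M|\in\{2,3,\dots\}$, let $l=(l_0,\dots,l_{\mathfrak L})\in\mathbb N^{\mathfrak L+1}$ satisfy $\mathfrak L\ge|\mathcal M|+1$, $\sum_{i=1}^{\mathfrak L}l_i(l_{i-1}+1)\le\mathfrak d$, $l_0=d$, $l_{\mathfrak L}=1$, $l_1\ge 2d|\mathcal M|$, $l_k\ge 2|\mathcal M|-2k+3$ for all $k\in\{2,\dots,|\mathcal M|\}$, and $l_i\ge 2$ for all $i\in\mathbb N\cap(|\mathcal M|,\mathfrak L)$. Then there exists $\theta\in\mathbb R^{\mathfrak d}$ such that $\|\theta\|_\infty\le\max\{1,L,\sup_{z\in\mathcal M}\|z\|_\infty,2\sup_{z\in\mathcal M}|f(z)|\}$ and $$\sup_{x\in D}|f(x)-\mathscr N^{\theta,l}_{u,v}(x)|\le 2L\Bigl[\sup_{x\in D}\Bigl(\inf_{y\in\mathcal M}\sum_{i=1}^d|x_i-y_i|\Bigr)\Bigr].$$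
   Context: $\|\cdot\|_\infty$ is the maximum norm. For $r,s\in\mathbb N$, $k\in\mathbb N_0$, $\theta\in\mathbb R^{\mathfrak d}$ with $\mathfrak d\ge k+rs+r$, $\mathcal A^{\theta,k}_{r,s}\colon\mathbb R^s\to\mathbb R^r$ has $i$-th component $x\mapsto\sum_{j=1}^s\theta_{k+(i-1)s+j}x_j+\theta_{k+rs+i}$. $\mathfrak C_{u,v,n}$ applies $y\mapsto\max\{u,\min\{y,v\}\}$ componentwise on $\mathbb R^n$ and $\mathfrak R_n$ applies $y\mapsto\max\{y,0\}$ componentwise. For $l=(l_0,\dots,l_{\mathfrak L})$ with $\mathfrak d\ge\sum_kl_k(l_{k-1}+1)$ and $s_k=\sum_{j=1}^kl_j(l_{j-1}+1)$, $\mathscr N^{\theta,l}_{u,v}=\mathfrak C_{u,v,l_{\mathfrak L}}\circ\mathcal A^{\theta,s_{\mathfrak L-1}}_{l_{\mathfrak L},l_{\mathfrak L-1}}\circ\mathfrak R_{l_{\mathfrak L-1}}\circ\cdots\circ\mathfrak R_{l_1}\circ\mathcal A^{\theta,0}_{l_1,l_0}\colon\mathbb R^{l_0}\to\mathbb R^{l_{\mathfrak L}}$. *)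

theory Defs
  imports "HOL-Analysis.Analysis" "HOL-Library.Extended_Real"
begin

text \<open>Vectors in R^n are represented as functions nat => real, components indexed 1..n.
  The parameter vector theta in R^dd is a function nat => real, only entries 1..dd matter.\<close>

definition is_vec :: "nat \<Rightarrow> (nat \<Rightarrow> real) \<Rightarrow> bool" where
  "is_vec n x \<longleftrightarrow> (\<forall>i. i \<notin> {1..n} \<longrightarrow> x i = 0)"

definition affineA :: "(nat \<Rightarrow> real) \<Rightarrow> nat \<Rightarrow> nat \<Rightarrow> nat \<Rightarrow> (nat \<Rightarrow> real) \<Rightarrow> (nat \<Rightarrow> real)" where
  "affineA \<theta> k r s x = (\<lambda>i. if i \<in> {1..r}
      then (\<Sum>j=1..s. \<theta> (k + (i - 1) * s + j) * x j) + \<theta> (k + r * s + i) else 0)"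

definition reluR :: "nat \<Rightarrow> (nat \<Rightarrow> real) \<Rightarrow> (nat \<Rightarrow> real)" where
  "reluR n x = (\<lambda>i. if i \<in> {1..n} then max (x i) 0 else 0)"

definition clipC :: "ereal \<Rightarrow> ereal \<Rightarrow> nat \<Rightarrow> (nat \<Rightarrow> real) \<Rightarrow> (nat \<Rightarrow> real)" where
  "clipC u v n x = (\<lambda>i. if i \<in> {1..n} then real_of_ereal (max u (min (ereal (x i)) v)) else 0)"

definition sArch :: "nat list \<Rightarrow> nat \<Rightarrow> nat" where
  "sArch l k = (\<Sum>j=1..k. l ! j * (l ! (j - 1) + 1))"

fun netPre :: "(nat \<Rightarrow> real) \<Rightarrow> nat list \<Rightarrow> nat \<Rightarrow> (nat \<Rightarrow> real) \<Rightarrow> (nat \<Rightarrow> real)" where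
  "netPre \<theta> l 0 x = x"
| "netPre \<theta> l (Suc 0) x = affineA \<theta> 0 (l ! 1) (l ! 0) x"
| "netPre \<theta> l (Suc (Suc k)) x =
     affineA \<theta> (sArch l (Suc k)) (l ! Suc (Suc k)) (l ! Suc k)
       (reluR (l ! Suc k) (netPre \<theta> l (Suc k) x))"

definition realNN :: "(nat \<Rightarrow> real) \<Rightarrow> nat list \<Rightarrow> ereal \<Rightarrow> ereal \<Rightarrow> (nat \<Rightarrow> real) \<Rightarrow> (nat \<Rightarrow> real)" where
  "realNN \<theta> l u v x = clipC u v (l ! (length l - 1)) (netPre \<theta> l (length l - 1) x)"

definition linf :: "nat \<Rightarrow> (nat \<Rightarrow> real) \<Rightarrow> real" where
  "linf n x = Max ((\<lambda>i. \<bar>x i\<bar>) ` {1..n})"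

end

theory Submission
  imports Defs
begin

lemma sArch_Suc: "sArch l (Suc k) = sArch l k + l ! Suc k * (l ! k + 1)"
  unfolding sArch_def by simp

lemma sArch_mono: "k \<le> k' \<Longrightarrow> sArch l k \<le> sArch l k'"
  unfolding sArch_def by (rule sum_mono2) auto

definition Pw :: "nat list \<Rightarrow> nat \<Rightarrow> nat \<Rightarrow> nat \<times> nat \<times> nat \<Rightarrow> bool" where
  "Pw l LL p t = (case t of (k,i,j) \<Rightarrow> k \<in> {1..LL} \<and> i \<in> {1..l!k} \<and> j \<in> {1..l!(k-1)}
      \<and> p = sArch l (k-1) + (i-1) * l!(k-1) + j)"

definition Pb :: "nat list \<Rightarrow> nat \<Rightarrow> nat \<Rightarrow> nat \<times> nat \<Rightarrow> bool" where
  "Pb l LL p t = (case t of (k,i) \<Rightarrow> k \<in> {1..LL} \<and> i \<in> {1..l!k}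
      \<and> p = sArch l (k-1) + l!k * l!(k-1) + i)"

lemma mult_idx_le: "i \<in> {1..b} \<Longrightarrow> j \<in> {1..a::nat} \<Longrightarrow> (i-1)*a + j \<le> b * a"
proof -
  assume "i \<in> {1..b}" "j \<in> {1..a}"
  then have "(i-1)*a + j \<le> (i-1)*a + a" by simp
  also have "\<dots> = i * a" using \<open>i \<in> {1..b}\<close> by (cases i) auto
  also have "\<dots> \<le> b * a" using \<open>i \<in> {1..b}\<close> by simp
  finally show ?thesis .
qed

lemma mult_idx_inj: "i \<in> {1..b} \<Longrightarrow> j \<in> {1..a::nat} \<Longrightarrow> i' \<in> {1..b} \<Longrightarrow> j' \<in> {1..a}
   \<Longrightarrow> (i-1)*a + j = (i'-1)*a + j' \<Longrightarrow> i = i' \<and> j = j'"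
proof -
  assume as: "i \<in> {1..b}" "j \<in> {1..a::nat}" "i' \<in> {1..b}" "j' \<in> {1..a}"
     and e: "(i-1)*a + j = (i'-1)*a + j'"
  have e2: "(j - 1) + (i-1)*a = (j'-1) + (i'-1)*a" using as e by auto
  have a0: "a > 0" using as by auto
  have aux: "jj < a \<Longrightarrow> (jj + c*a) div a = c \<and> (jj + c*a) mod a = jj" for jj c by simp
  have d1: "((j - 1) + (i-1)*a) div a = i - 1" "((j - 1) + (i-1)*a) mod a = j - 1"
  proof - have "j - 1 < a" using as by auto from aux[OF this] show "((j - 1) + (i-1)*a) div a = i - 1" "((j - 1) + (i-1)*a) mod a = j - 1" by blast+ qed
  have d2: "((j' - 1) + (i'-1)*a) div a = i' - 1" "((j' - 1) + (i'-1)*a) mod a = j' - 1"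
  proof - have "j' - 1 < a" using as by auto from aux[OF this] show "((j' - 1) + (i'-1)*a) div a = i' - 1" "((j' - 1) + (i'-1)*a) mod a = j' - 1" by blast+ qed
  show ?thesis using d1 d2 e2 as by (metis atLeastAtMost_iff le_add_diff_inverse le_add_diff_inverse2)
qed

lemma Pw_range: "Pw l LL p (k,i,j) \<Longrightarrow> sArch l (k-1) < p \<and> p \<le> sArch l (k-1) + l!k * l!(k-1)"
  unfolding Pw_def using mult_idx_le[of i "l!k" j "l!(k-1)"] by auto

lemma Pb_range: "Pb l LL p (k,i) \<Longrightarrow> sArch l (k-1) + l!k * l!(k-1) < p \<and> p \<le> sArch l k"
proof -
  assume "Pb l LL p (k,i)"
  then have h: "k \<ge> 1" "i \<le> l!k" "i \<ge> 1" "p = sArch l (k-1) + l!k * l!(k-1) + i" unfolding Pb_def by auto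
  then have "sArch l k = sArch l (k-1) + l ! k * (l ! (k-1) + 1)" using sArch_Suc[of l "k-1"] by simp
  then show ?thesis using h by (simp add: algebra_simps)
qed

lemma layer_uniq: "k \<ge> 1 \<Longrightarrow> k' \<ge> 1 \<Longrightarrow> sArch l (k-1) < p \<Longrightarrow> p \<le> sArch l k
   \<Longrightarrow> sArch l (k'-1) < p \<Longrightarrow> p \<le> sArch l k' \<Longrightarrow> k = k'"
proof (rule ccontr)
  assume a: "k \<ge> 1" "k' \<ge> 1" "sArch l (k-1) < p" "p \<le> sArch l k"
    "sArch l (k'-1) < p" "p \<le> sArch l k'" "k \<noteq> k'"
  show False
  proof (cases "k < k'")
    case True
    then have "sArch l k \<le> sArch l (k'-1)" by (intro sArch_mono) simp
    then show False using a by simp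
  next
    case False
    then have "sArch l k' \<le> sArch l (k-1)" using a by (intro sArch_mono) simp
    then show False using a by simp
  qed
qed

lemma Pw_le_sArch: "Pw l LL p (k,i,j) \<Longrightarrow> p \<le> sArch l k"
proof -
  assume a: "Pw l LL p (k,i,j)"
  then have "k \<ge> 1" unfolding Pw_def by auto
  then have "sArch l k = sArch l (k-1) + l ! k * (l ! (k-1) + 1)" using sArch_Suc[of l "k-1"] by simp
  then show ?thesis using Pw_range[OF a] by (simp add: algebra_simps)
qed

lemma Pw_uniq: "Pw l LL p t \<Longrightarrow> Pw l LL p t' \<Longrightarrow> t = t'"
proof -
  assume a: "Pw l LL p t" "Pw l LL p t'"
  obtain k i j where t: "t = (k,i,j)" by (cases t) auto
  obtain k' i' j' where t': "t' = (k',i',j')" by (cases t') auto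
  have k1: "k \<ge> 1" "k' \<ge> 1" using a t t' unfolding Pw_def by auto
  have "k = k'" using layer_uniq[OF k1] Pw_range[of l LL p k i j] Pw_range[of l LL p k' i' j']
     Pw_le_sArch[of l LL p k i j] Pw_le_sArch[of l LL p k' i' j'] a t t' by auto
  then show ?thesis using a t t' mult_idx_inj[of i "l!k" j "l!(k-1)" i' j'] unfolding Pw_def by auto
qed

lemma Pb_uniq: "Pb l LL p t \<Longrightarrow> Pb l LL p t' \<Longrightarrow> t = t'"
proof -
  assume a: "Pb l LL p t" "Pb l LL p t'"
  obtain k i where t: "t = (k,i)" by (cases t) auto
  obtain k' i' where t': "t' = (k',i')" by (cases t') auto
  have k1: "k \<ge> 1" "k' \<ge> 1" using a t t' unfolding Pb_def by auto
  have r1: "sArch l (k-1) < p" "p \<le> sArch l k" using Pb_range[of l LL p k i] a t by auto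
  have r2: "sArch l (k'-1) < p" "p \<le> sArch l k'" using Pb_range[of l LL p k' i'] a t' by auto
  have "k = k'" using layer_uniq[OF k1 r1 r2] .
  then show ?thesis using a t t' unfolding Pb_def by auto
qed

lemma Pw_Pb: "Pw l LL p t \<Longrightarrow> Pb l LL p t' \<Longrightarrow> False"
proof -
  assume a: "Pw l LL p t" "Pb l LL p t'"
  obtain k i j where t: "t = (k,i,j)" by (cases t) auto
  obtain k' i' where t': "t' = (k',i')" by (cases t') auto
  have k1: "k \<ge> 1" "k' \<ge> 1" using a t t' unfolding Pw_def Pb_def by auto
  have r1: "sArch l (k-1) < p" "p \<le> sArch l k" using Pw_range[of l LL p k i j] Pw_le_sArch[of l LL p k i j] a t by auto
  have r2: "sArch l (k'-1) < p" "p \<le> sArch l k'" using Pb_range[of l LL p k' i'] a t' by auto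
  have "k = k'" using layer_uniq[OF k1 r1 r2] .
  then show False using a t t' Pw_range[of l LL p k i j] Pb_range[of l LL p k' i'] by auto
qed

lemma theta_exists:
  fixes W :: "nat \<Rightarrow> nat \<Rightarrow> nat \<Rightarrow> real" and B :: "nat \<Rightarrow> nat \<Rightarrow> real"
  shows "\<exists>\<theta>. (\<forall>p. \<theta> p = 0 \<or> (\<exists>k i j. \<theta> p = W k i j) \<or> (\<exists>k i. \<theta> p = B k i))
    \<and> (\<forall>k\<in>{1..LL}. \<forall>i\<in>{1..l!k}. (\<forall>j\<in>{1..l!(k-1)}. \<theta> (sArch l (k-1) + (i-1)*l!(k-1) + j) = W k i j)
           \<and> \<theta> (sArch l (k-1) + l!k * l!(k-1) + i) = B k i)"
proof -
  define \<theta> where "\<theta> p = (if \<exists>t. Pw l LL p t then (case (SOME t. Pw l LL p t) of (k,i,j) \<Rightarrow> W k i j)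
     else if \<exists>t. Pb l LL p t then (case (SOME t. Pb l LL p t) of (k,i) \<Rightarrow> B k i) else 0)" for p
  have 1: "\<theta> p = 0 \<or> (\<exists>k i j. \<theta> p = W k i j) \<or> (\<exists>k i. \<theta> p = B k i)" for p
    unfolding \<theta>_def by (auto split: prod.splits)
  have 2: "\<theta> (sArch l (k-1) + (i-1)*l!(k-1) + j) = W k i j"
    if "k\<in>{1..LL}" "i\<in>{1..l!k}" "j\<in>{1..l!(k-1)}" for k i j
  proof -
    let ?p = "sArch l (k-1) + (i-1)*l!(k-1) + j"
    have P: "Pw l LL ?p (k,i,j)" using that unfolding Pw_def by auto
    then have "(SOME t. Pw l LL ?p t) = (k,i,j)" using Pw_uniq by (metis someI_ex)
    then show ?thesis unfolding \<theta>_def using P by auto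
  qed
  have 3: "\<theta> (sArch l (k-1) + l!k*l!(k-1) + i) = B k i"
    if "k\<in>{1..LL}" "i\<in>{1..l!k}" for k i
  proof -
    let ?p = "sArch l (k-1) + l!k*l!(k-1) + i"
    have P: "Pb l LL ?p (k,i)" using that unfolding Pb_def by auto
    then have "(SOME t. Pb l LL ?p t) = (k,i)" using Pb_uniq by (metis someI_ex)
    moreover have "\<not> (\<exists>t. Pw l LL ?p t)" using P Pw_Pb by blast
    ultimately show ?thesis unfolding \<theta>_def using P by auto
  qed
  show ?thesis using 1 2 3 by blast
qed

lemma aux_divmod: "jj < (a::nat) \<Longrightarrow> (jj + c*a) div a = c \<and> (jj + c*a) mod a = jj" by simp

lemma l1idx:
  fixes d c s :: nat
  assumes "1 \<le> c" "c \<le> d" "1 \<le> s"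
  shows "(2*d*(s-1) + 2*c - 1 - 1) = 2*(d*(s-1) + (c-1))"
    and "2*d*(s-1) + 2*c - 1 = 2*(d*(s-1) + (c-1)) + 1"
    and "((d*(s-1) + (c-1)) mod d) = c - 1"
    and "(2*(d*(s-1) + (c-1))) div (2*d) = s - 1"
    and "(2*(d*(s-1) + (c-1)) + 1) div (2*d) = s - 1"
proof -
  define c' where "c' = c - 1"
  define s' where "s' = s - 1"
  have cs: "c = Suc c'" "s = Suc s'" using assms unfolding c'_def s'_def by auto
  have "c' < d" using assms cs by simp
  show "(2*d*(s-1) + 2*c - 1 - 1) = 2*(d*(s-1) + (c-1))" using cs by simp
  show "2*d*(s-1) + 2*c - 1 = 2*(d*(s-1) + (c-1)) + 1" using cs by simp
  show "((d*(s-1) + (c-1)) mod d) = c - 1" using cs \<open>c' < d\<close> aux_divmod[of c' d s'] by (simp add: ac_simps)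
  have "2*c' < 2*d" using \<open>c' < d\<close> by simp
  from aux_divmod[OF this, of s']
  show "(2*(d*(s-1) + (c-1))) div (2*d) = s - 1" using cs by (simp add: algebra_simps)
  have "2*c'+1 < 2*d" using \<open>c' < d\<close> by simp
  from aux_divmod[OF this, of s']
  show "(2*(d*(s-1) + (c-1)) + 1) div (2*d) = s - 1" using cs by (simp add: algebra_simps)
qed

lemma sum_pairs: fixes a m :: nat shows "(\<Sum>j=a+1..a+2*m. (h::nat\<Rightarrow>real) j) = (\<Sum>c=1..m. h (a+2*c-1) + h (a+2*c))"
proof (induction m)
  case 0 then show ?case by simp
next
  case (Suc m)
  have e: "a + 2 * Suc m = Suc (Suc (a + 2*m))" by simp
  have "(\<Sum>j=a+1..a+2*Suc m. h j) = (\<Sum>j=a+1..a+2*m. h j) + h (a + 2*m+1) + h (a+2*m+2)"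
    unfolding e by simp
  also have "\<dots> = (\<Sum>c=1..Suc m. h (a+2*c-1) + h (a+2*c))" using Suc by simp
  finally show ?case .
qed

definition dl :: "nat \<Rightarrow> nat \<Rightarrow> real" where "dl a j = (if j = a then 1 else 0)"

lemma sum_dl: "finite S \<Longrightarrow> (\<Sum>j\<in>S. dl a j * r j) = (if a \<in> S then r a else 0)"
proof -
  assume "finite S"
  have "sum (\<lambda>j. dl a j * r j) S = sum (\<lambda>j. if a = j then r j else 0) S" by (rule sum.cong) (auto simp: dl_def)
  also have "\<dots> = (if a \<in> S then r a else 0)" using \<open>finite S\<close> by simp
  finally show ?thesis .
qed

lemma sum_dl2: "a \<in> {1..m} \<Longrightarrow> b \<in> {1..m} \<Longrightarrow>
   (\<Sum>j=1..m. (dl a j - dl b j) * R j) = R a - R b"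
  by (simp add: left_diff_distrib distrib_right sum.distrib sum_subtractf sum_dl)

lemma sum_dl3: "3 \<le> m \<Longrightarrow> (\<Sum>j=1..m. (dl 1 j + dl 2 j - dl 3 j) * R j) = R 1 + R 2 - R 3"
  by (simp add: left_diff_distrib distrib_right sum.distrib sum_subtractf sum_dl)

lemma sum_dl3': "3 \<le> m \<Longrightarrow> (\<Sum>j=1..m. (dl 3 j - dl 1 j - dl 2 j) * R j) = R 3 - R 1 - R 2"
  by (simp add: left_diff_distrib distrib_right sum.distrib sum_subtractf sum_dl)

lemma sum_dl5: "5 \<le> m \<Longrightarrow> (\<Sum>j=1..m. (dl 1 j + dl 2 j - dl 3 j - dl 4 j + dl 5 j) * R j) = R 1 + R 2 - R 3 - R 4 + R 5"
  by (simp add: left_diff_distrib distrib_right sum.distrib sum_subtractf sum_dl)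

fun mxx :: "(nat \<Rightarrow> real) \<Rightarrow> nat \<Rightarrow> real" where
  "mxx g 0 = g 1"
| "mxx g (Suc 0) = g 1"
| "mxx g (Suc (Suc k)) = max (mxx g (Suc k)) (g (Suc (Suc k)))"

lemma mxx_Suc: "k \<ge> 1 \<Longrightarrow> mxx g (Suc k) = max (mxx g k) (g (Suc k))"
  by (cases k) auto

lemma mxx_ge: "1 \<le> t \<Longrightarrow> t \<le> k \<Longrightarrow> g t \<le> mxx g k"
proof (induction k arbitrary: t)
  case (Suc k)
  show ?case
  proof (cases "k = 0")
    case True then show ?thesis using Suc by auto
  next
    case False
    show ?thesis
    proof (cases "t = Suc k")
      case True then show ?thesis using False mxx_Suc[of k g] by simp
    next
      case f2: False
      then have "g t \<le> mxx g k" using Suc by simp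
      then show ?thesis using False mxx_Suc[of k g] by simp
    qed
  qed
qed auto

lemma mxx_in: "1 \<le> k \<Longrightarrow> \<exists>t\<in>{1..k}. mxx g k = g t"
proof (induction g k rule: mxx.induct)
  case (3 g k)
  then obtain t where "t\<in>{1..Suc k}" "mxx g (Suc k) = g t" by auto
  then show ?case by (cases "mxx g (Suc k) \<le> g (Suc (Suc k))") (auto simp: max_def intro: bexI[of _ t])
qed auto

locale netw =
  fixes d n LL :: nat and l :: "nat list" and L :: real and z :: "nat \<Rightarrow> nat \<Rightarrow> real" and fv :: "nat \<Rightarrow> real"
  assumes d1: "d \<ge> 1" and n2: "n \<ge> 2" and LLn: "LL \<ge> n + 1" and len: "length l = LL + 1"
    and l0: "l!0 = d" and lLL: "l!LL = 1" and l1: "l!1 \<ge> 2*d*n"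
    and lk: "\<forall>k\<in>{2..n}. l!k \<ge> 2*n+3-2*k" and lbig: "\<forall>i. n < i \<and> i < LL \<longrightarrow> l!i \<ge> 2"
    and lpos: "\<forall>i\<le>LL. l!i \<ge> 1"
begin

definition sg :: "nat \<Rightarrow> real" where "sg i = (if even (i - 1) then 1 else -1)"
definition cc :: "nat \<Rightarrow> nat" where "cc i = ((i - 1) div 2) mod d + 1"
definition tt :: "nat \<Rightarrow> nat" where "tt i = (i - 1) div (2*d) + 1"
definition blk :: "nat \<Rightarrow> nat \<Rightarrow> real" where "blk s j = (if j \<le> 2*d*n \<and> tt j = s then 1 else 0)"

definition W1 :: "nat \<Rightarrow> nat \<Rightarrow> real" where
  "W1 i j = (if i \<le> 2*d*n \<and> j = cc i then sg i else 0)"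
definition B1 :: "nat \<Rightarrow> real" where
  "B1 i = (if i \<le> 2*d*n then - sg i * z (tt i) (cc i) else 0)"
definition W2 :: "nat \<Rightarrow> nat \<Rightarrow> real" where
  "W2 i j = (if i = 1 then L * (blk 2 j - blk 1 j)
     else if 2 \<le> i \<and> i \<le> 2*n-1 then (if even i then -L else L) * blk (i div 2 + 1) j else 0)"
definition B2 :: "nat \<Rightarrow> real" where
  "B2 i = (if i = 1 then fv 1 - fv 2
     else if 2 \<le> i \<and> i \<le> 2*n-1 then (if even i then 1 else -1) * fv (i div 2 + 1) else 0)"
definition W3 :: "nat \<Rightarrow> nat \<Rightarrow> nat \<Rightarrow> real" where
  "W3 k i j = (if i = 1 then dl 1 j + dl 2 j - dl 3 j - dl 4 j + dl 5 j
     else if 2 \<le> i \<and> i \<le> 2*n+3-2*k then (if even i then dl (i+2) j - dl (i+3) j else dl (i+2) j - dl (i+1) j)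
     else 0)"
definition Wn1 :: "nat \<Rightarrow> nat \<Rightarrow> real" where
  "Wn1 i j = (if i = 1 then dl 1 j + dl 2 j - dl 3 j else if i = 2 then dl 3 j - dl 1 j - dl 2 j else 0)"
definition Wl :: "nat \<Rightarrow> nat \<Rightarrow> real" where
  "Wl i j = (if i = 1 then dl 1 j - dl 2 j else if i = 2 then dl 2 j - dl 1 j else 0)"

definition WW :: "nat \<Rightarrow> nat \<Rightarrow> nat \<Rightarrow> real" where
  "WW k i j = (if k = 1 then W1 i j else if k = 2 then W2 i j else if k \<le> n then W3 k i j
     else if k = n + 1 then Wn1 i j else Wl i j)"
definition BB :: "nat \<Rightarrow> nat \<Rightarrow> real" where
  "BB k i = (if k = 1 then B1 i else if k = 2 then B2 i else 0)"

lemma cc_range: "cc i \<in> {1..d}"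
proof -
  have "((i - 1) div 2) mod d < d" using d1 by simp
  then show ?thesis unfolding cc_def by simp
qed

lemma bounds:
  assumes "1 \<le> b" "0 \<le> L" "L \<le> b" "\<forall>t\<in>{1..n}. \<forall>c\<in>{1..d}. \<bar>z t c\<bar> \<le> b"
    "\<forall>t\<in>{1..n}. 2 * \<bar>fv t\<bar> \<le> b"
  shows "\<bar>WW k i j\<bar> \<le> b" "\<bar>BB k i\<bar> \<le> b"
proof -
  have b0: "1 \<le> b" by (rule assms(1))
  have "\<bar>W1 i j\<bar> \<le> b" using b0 unfolding W1_def sg_def by simp
  moreover have "\<bar>W2 i j\<bar> \<le> b"
  proof -
    have "\<bar>blk 2 j - blk 1 j\<bar> \<le> 1" unfolding blk_def by simp
    from mult_left_mono[OF this assms(2)]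
    have "\<bar>L * (blk 2 j - blk 1 j)\<bar> \<le> L * 1" using assms(2) by (simp add: abs_mult)
    moreover have "\<bar>L * blk s j\<bar> \<le> L" "\<bar>- L * blk s j\<bar> \<le> L" for s using assms(2) unfolding blk_def by simp_all
    ultimately have "\<bar>W2 i j\<bar> \<le> L" unfolding W2_def using assms(2) by simp
    then show ?thesis using assms(3) by simp
  qed
  moreover have "\<bar>W3 k i j\<bar> \<le> b"
  proof -
    have "\<bar>dl 1 j + dl 2 j - dl 3 j - dl 4 j + dl 5 j\<bar> \<le> 1" unfolding dl_def by simp
    moreover have "\<bar>dl a j - dl c j\<bar> \<le> 1" for a c unfolding dl_def by simp
    ultimately have "\<bar>W3 k i j\<bar> \<le> 1" unfolding W3_def by simp
    then show ?thesis using b0 by simp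
  qed
  moreover have "\<bar>Wn1 i j\<bar> \<le> b"
  proof -
    have "\<bar>dl 1 j + dl 2 j - dl 3 j\<bar> \<le> 1" unfolding dl_def by simp
    moreover have "\<bar>dl 3 j - dl 1 j - dl 2 j\<bar> \<le> 1" unfolding dl_def by simp
    ultimately have "\<bar>Wn1 i j\<bar> \<le> 1" unfolding Wn1_def by simp
    then show ?thesis using b0 by simp
  qed
  moreover have "\<bar>Wl i j\<bar> \<le> b"
  proof -
    have "\<bar>dl a j - dl c j\<bar> \<le> 1" for a c unfolding dl_def by simp
    then have "\<bar>Wl i j\<bar> \<le> 1" unfolding Wl_def by simp
    then show ?thesis using b0 by simp
  qed
  ultimately show "\<bar>WW k i j\<bar> \<le> b" unfolding WW_def by auto
  have "\<bar>B1 i\<bar> \<le> b"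
  proof (cases "i \<le> 2*d*n")
    case True
    have "(i - 1) div (2*d) < n" 
    proof (intro less_mult_imp_div_less)
      have "0 < n * (2*d)" using d1 n2 by simp
      moreover have "n * (2*d) = 2*d*n" by simp
      ultimately show "i - 1 < n * (2 * d)" using True by linarith
    qed
    then have "tt i \<in> {1..n}" unfolding tt_def by auto
    moreover have "cc i \<in> {1..d}" by (rule cc_range)
    ultimately show ?thesis using assms True unfolding B1_def sg_def by auto
  qed (use assms(1) in \<open>simp add: B1_def\<close>)
  moreover have "\<bar>B2 i\<bar> \<le> b"
  proof -
    have h: "2 * \<bar>fv 1\<bar> \<le> b" "2 * \<bar>fv 2\<bar> \<le> b" using assms(5) n2 by auto
    have "\<bar>fv 1 - fv 2\<bar> \<le> \<bar>fv 1\<bar> + \<bar>fv 2\<bar>" by (rule abs_triangle_ineq4)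
    then have "\<bar>fv 1 - fv 2\<bar> \<le> b" using h by linarith
    moreover have "\<bar>fv (i div 2 + 1)\<bar> \<le> b" if "2 \<le> i" "i \<le> 2*n-1"
    proof -
      have "i div 2 + 1 \<in> {1..n}" using that by auto
      then show ?thesis using assms(5) by fastforce
    qed
    ultimately show ?thesis unfolding B2_def using assms by auto
  qed
  ultimately show "\<bar>BB k i\<bar> \<le> b" unfolding BB_def using assms by auto
qed


end

context netw begin

definition nrm :: "(nat \<Rightarrow> real) \<Rightarrow> nat \<Rightarrow> real" where "nrm x t = (\<Sum>c=1..d. \<bar>x c - z t c\<bar>)"
definition gg :: "(nat \<Rightarrow> real) \<Rightarrow> nat \<Rightarrow> real" where "gg x t = fv t - L * nrm x t"
definition P1 :: "(nat \<Rightarrow> real) \<Rightarrow> nat \<Rightarrow> real" where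
  "P1 x i = (if 1 \<le> i \<and> i \<le> 2*d*n then sg i * (x (cc i) - z (tt i) (cc i)) else 0)"
definition Pk :: "(nat \<Rightarrow> real) \<Rightarrow> nat \<Rightarrow> nat \<Rightarrow> real" where
  "Pk x k i = (if i = 1 then mxx (gg x) (k-1) - gg x k
     else if 2 \<le> i \<and> i \<le> 2*n+3-2*k then (if even i then 1 else -1) * gg x (i div 2 + k - 1) else 0)"
definition Q :: "(nat \<Rightarrow> real) \<Rightarrow> nat \<Rightarrow> nat \<Rightarrow> real" where
  "Q x k i = (if i = 1 then mxx (gg x) n else if i = 2 \<and> 2 \<le> l!k then - mxx (gg x) n else 0)"
definition lay :: "nat \<Rightarrow> (nat \<Rightarrow> real) \<Rightarrow> nat \<Rightarrow> real" where
  "lay k y = (\<lambda>i. if i \<in> {1..l!k} then (\<Sum>j=1..l!(k-1). WW k i j * y j) + BB k i else 0)"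


lemma lay1: "lay 1 x = P1 x"
proof
  fix i
  show "lay 1 x i = P1 x i"
  proof (cases "i \<in> {1..l!1}")
    case True
    have "(\<Sum>j=1..d. W1 i j * x j) = (if i \<le> 2*d*n then sg i * x (cc i) else 0)"
    proof (cases "i \<le> 2*d*n")
      case True
      have "(\<Sum>j=1..d. W1 i j * x j) = (\<Sum>j=1..d. if cc i = j then sg i * x j else 0)"
        by (rule sum.cong) (auto simp: W1_def True)
      also have "\<dots> = sg i * x (cc i)" using cc_range by simp
      finally show ?thesis using True by simp
    qed (simp add: W1_def)
    then show ?thesis using True l0 unfolding lay_def P1_def WW_def BB_def B1_def by (auto simp: algebra_simps)
  next
    case False
    then have "i = 0 \<or> i > 2*d*n" using l1 by auto
    then show ?thesis using False unfolding lay_def P1_def by auto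
  qed
qed

lemma blk_char:
  assumes "s \<in> {1..n}" "j \<ge> 1"
  shows "blk s j = (if j \<in> {2*d*(s-1)+1..2*d*(s-1)+2*d} then 1 else 0)"
proof -
  have dp: "2*d > 0" using d1 by simp
  have e1: "s * (2*d) = 2*d*(s-1) + 2*d" using assms by (cases s) auto
  have "((j-1) div (2*d) = s - 1) \<longleftrightarrow> (s-1 \<le> (j-1) div (2*d) \<and> (j-1) div (2*d) < s)" using assms by auto
  also have "\<dots> \<longleftrightarrow> ((s-1)*(2*d) \<le> j - 1 \<and> j - 1 < s * (2*d))"
    using less_eq_div_iff_mult_less_eq[OF dp] div_less_iff_less_mult[OF dp] by simp
  also have "\<dots> \<longleftrightarrow> j \<in> {2*d*(s-1)+1..2*d*(s-1)+2*d}" using e1 assms by (auto simp: algebra_simps)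
  finally have c: "((j-1) div (2*d) = s - 1) \<longleftrightarrow> j \<in> {2*d*(s-1)+1..2*d*(s-1)+2*d}" .
  have "2*d*(s-1)+2*d \<le> 2*d*n" using e1 assms by (metis atLeastAtMost_iff mult.commute mult_le_mono2)
  then have "j \<in> {2*d*(s-1)+1..2*d*(s-1)+2*d} \<Longrightarrow> j \<le> 2*d*n" by auto
  moreover have "tt j = s \<longleftrightarrow> (j-1) div (2*d) = s - 1" unfolding tt_def using assms by auto
  ultimately show ?thesis unfolding blk_def using c by auto
qed

lemma P1_pair:
  assumes "s \<in> {1..n}" "c \<in> {1..d}"
  shows "max (P1 x (2*d*(s-1) + 2*c - 1)) 0 + max (P1 x (2*d*(s-1) + 2*c)) 0 = \<bar>x c - z s c\<bar>"
proof -
  have e1: "s * (2*d) = 2*d*(s-1) + 2*d" using assms by (cases s) auto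
  have le: "2*d*(s-1) + 2*c \<le> 2*d*n"
  proof -
    have "s * (2*d) \<le> n * (2*d)" using assms by (intro mult_le_mono1) simp
    moreover have "n * (2*d) = 2*d*n" by simp
    moreover have "2*c \<le> 2*d" using assms by simp
    ultimately show ?thesis using e1 by linarith
  qed
  let ?i = "2*d*(s-1) + 2*c - 1" and ?i' = "2*d*(s-1) + 2*c"
  have c1: "1 \<le> c" "c \<le> d" "1 \<le> s" using assms by auto
  note F = l1idx[OF c1]
  define A where "A = d*(s-1) + (c-1)"
  have F1: "?i - 1 = 2*A" and F2: "?i' - 1 = 2*A + 1" and F3: "A mod d = c - 1"
    and F4: "(2*A) div (2*d) = s - 1" and F5: "(2*A+1) div (2*d) = s - 1"
    using F unfolding A_def by simp_all
  have d2: "(2*A) div 2 = A" "(2*A+1) div 2 = A" by simp_all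
  have a1: "sg ?i = 1" "cc ?i = c" "tt ?i = s"
    unfolding sg_def cc_def tt_def F1 d2 F3 F4 using c1 by simp_all
  have a2: "sg ?i' = -1" "cc ?i' = c" "tt ?i' = s"
    unfolding sg_def cc_def tt_def F2 d2 F3 F5 using c1 by simp_all
  have "P1 x ?i = x c - z s c" unfolding P1_def using a1 le c1 by auto
  moreover have "P1 x ?i' = - (x c - z s c)" unfolding P1_def using a2 le c1 by auto
  ultimately show ?thesis by auto
qed

lemma blocksum:
  assumes "s \<in> {1..n}"
  shows "(\<Sum>j=1..l!1. blk s j * max (P1 x j) 0) = nrm x s"
proof -
  let ?a = "2*d*(s-1)"
  have e1: "s * (2*d) = 2*d*(s-1) + 2*d" using assms by (cases s) auto
  have sub: "{?a+1..?a+2*d} \<subseteq> {1..l!1}"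
  proof -
    have "?a + 2*d \<le> 2*d*n" using e1 assms by (metis atLeastAtMost_iff mult.commute mult_le_mono2)
    then show ?thesis using l1 by auto
  qed
  have "(\<Sum>j=1..l!1. blk s j * max (P1 x j) 0) = (\<Sum>j\<in>{1..l!1}. if j \<in> {?a+1..?a+2*d} then max (P1 x j) 0 else 0)"
    by (rule sum.cong) (auto simp: blk_char[OF assms])
  also have "\<dots> = (\<Sum>j\<in>{1..l!1} \<inter> {?a+1..?a+2*d}. max (P1 x j) 0)"
    by (rule sum.inter_restrict[symmetric]) simp
  also have "{1..l!1} \<inter> {?a+1..?a+2*d} = {?a+1..?a+2*d}" using sub by blast
  also have "(\<Sum>j\<in>{?a+1..?a+2*d}. max (P1 x j) 0) = (\<Sum>c=1..d. max (P1 x (?a+2*c-1)) 0 + max (P1 x (?a+2*c)) 0)"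
    by (rule sum_pairs)
  also have "\<dots> = (\<Sum>c=1..d. \<bar>x c - z s c\<bar>)"
    by (rule sum.cong) (use P1_pair[OF assms] in auto)
  finally show ?thesis unfolding nrm_def .
qed


lemma lay2: "lay 2 (reluR (l!1) (P1 x)) = Pk x 2"
proof
  fix i
  let ?R = "\<lambda>j. max (P1 x j) 0"
  have l2: "l!2 \<ge> 2*n - 1" using lk n2 by force
  have S: "(\<Sum>j=1..l!1. W2 i j * reluR (l!1) (P1 x) j) = (\<Sum>j=1..l!1. W2 i j * ?R j)"
    by (rule sum.cong) (auto simp: reluR_def)
  show "lay 2 (reluR (l!1) (P1 x)) i = Pk x 2 i"
  proof (cases "i \<in> {1..l!2}")
    case False
    then have "i = 0 \<or> i > 2*n - 1" using l2 by auto
    then show ?thesis using False n2 unfolding lay_def Pk_def by auto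
  next
    case True
    have lay: "lay 2 (reluR (l!1) (P1 x)) i = (\<Sum>j=1..l!1. W2 i j * ?R j) + B2 i"
      using True S unfolding lay_def WW_def BB_def by simp
    show ?thesis
    proof (cases "i = 1")
      case True
      have pw: "W2 i j * ?R j = L * (blk 2 j * ?R j) - L * (blk 1 j * ?R j)" for j
        unfolding W2_def using True by (simp add: algebra_simps)
      have "(\<Sum>j=1..l!1. W2 i j * ?R j) = (\<Sum>j=1..l!1. L * (blk 2 j * ?R j) - L * (blk 1 j * ?R j))"
        by (rule sum.cong[OF refl]) (rule pw)
      also have "\<dots> = L * (\<Sum>j=1..l!1. blk 2 j * ?R j) - L * (\<Sum>j=1..l!1. blk 1 j * ?R j)"
        by (simp only: sum_subtractf sum_distrib_left)
      also have "\<dots> = L * nrm x 2 - L * nrm x 1" using blocksum[of 1 x] blocksum[of 2 x] n2 by simp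
      finally have sv: "(\<Sum>j=1..l!1. W2 i j * ?R j) = L * nrm x 2 - L * nrm x 1" .
      have pv: "Pk x 2 i = (fv 1 - L * nrm x 1) - (fv 2 - L * nrm x 2)" using True by (simp add: Pk_def gg_def)
      have bv: "B2 i = fv 1 - fv 2" using True by (simp add: B2_def)
      show ?thesis using lay sv pv bv by linarith
    next
      case False
      show ?thesis
      proof (cases "i \<le> 2*n - 1")
        case True
        have "1 \<le> i div 2 + 1 \<and> i div 2 + 1 \<le> n" using True n2 by presburger
        then have s: "i div 2 + 1 \<in> {1..n}" by simp
        define c where "c = (if even i then -L else L)"
        have pw: "W2 i j * ?R j = c * (blk (i div 2 + 1) j * ?R j)" for j
          unfolding W2_def c_def using True False \<open>i \<in> {1..l!2}\<close> by simp
        have "(\<Sum>j=1..l!1. W2 i j * ?R j) = (\<Sum>j=1..l!1. c * (blk (i div 2 + 1) j * ?R j))"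
          by (rule sum.cong[OF refl]) (rule pw)
        also have "\<dots> = c * (\<Sum>j=1..l!1. blk (i div 2 + 1) j * ?R j)"
          by (simp only: sum_distrib_left)
        also have "\<dots> = c * nrm x (i div 2 + 1)" using blocksum[OF s] by simp
        finally have sv: "(\<Sum>j=1..l!1. W2 i j * ?R j) = c * nrm x (i div 2 + 1)" .
        have c2: "2 \<le> i \<and> i \<le> 2*n+3-2*2" using True False \<open>i \<in> {1..l!2}\<close> by auto
        have e: "i div 2 + 2 - 1 = i div 2 + 1" by simp
        have pv: "Pk x 2 i = (if even i then 1 else -1) * (fv (i div 2 + 1) - L * nrm x (i div 2 + 1))"
          using False c2 unfolding Pk_def gg_def e by simp
        have bv: "B2 i = (if even i then 1 else -1) * fv (i div 2 + 1)"
          using True False c2 unfolding B2_def by simp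
        show ?thesis
        proof (cases "even i")
          case True
          then show ?thesis using lay sv pv bv unfolding c_def by simp
        next
          case False
          then show ?thesis using lay sv pv bv unfolding c_def by simp
        qed
      next
        case f2: False
        have c: "i \<noteq> 1" "\<not> (2 \<le> i \<and> i \<le> 2*n-1)" "\<not> (2 \<le> i \<and> i \<le> 2*n+3-2*2)" using False f2 by auto
        have "\<And>j. W2 i j = 0" unfolding W2_def by (simp only: c if_False)
        then have "(\<Sum>j=1..l!1. W2 i j * ?R j) = 0" by simp
        moreover have "Pk x 2 i = 0" unfolding Pk_def by (simp only: c if_False)
        moreover have "B2 i = 0" unfolding B2_def by (simp only: c if_False)
        ultimately show ?thesis using lay by linarith
      qed
    qed
  qed
qed

lemma relu_id: "max a 0 - max (-a) 0 = (a::real)" by (simp add: max_def)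

lemma relu5: "max (A-G) 0 + max G 0 - max (-G) 0 - max H 0 + max (-H) 0 = max A G - (H::real)"
  by (simp add: max_def)


lemma lay3:
  assumes "3 \<le> k" "k \<le> n"
  shows "lay k (reluR (l!(k-1)) (Pk x (k-1))) = Pk x k"
proof
  fix i
  define k' where "k' = k - 3"
  have k': "k = k' + 3" using assms(1) unfolding k'_def by simp
  let ?R = "\<lambda>j. max (Pk x (k-1) j) 0"
  have lkm: "l!(k-1) \<ge> 2*n+3-2*(k-1)" using lk assms by force
  have lkk: "l!k \<ge> 2*n+3-2*k" using lk assms by force
  have S: "(\<Sum>j=1..l!(k-1). W3 k i j * reluR (l!(k-1)) (Pk x (k-1)) j) = (\<Sum>j=1..l!(k-1). W3 k i j * ?R j)"
    by (rule sum.cong) (auto simp: reluR_def)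
  show "lay k (reluR (l!(k-1)) (Pk x (k-1))) i = Pk x k i"
  proof (cases "i \<in> {1..l!k}")
    case False
    then have "i = 0 \<or> i > 2*n+3-2*k" using lkk by auto
    then show ?thesis using False n2 assms unfolding lay_def Pk_def by auto
  next
    case True
    have lay: "lay k (reluR (l!(k-1)) (Pk x (k-1))) i = (\<Sum>j=1..l!(k-1). W3 k i j * ?R j)"
      using True S assms unfolding lay_def WW_def BB_def by simp
    have mx: "mxx (gg x) (k-1) = max (mxx (gg x) (k-2)) (gg x (k-1))"
      using mxx_Suc[of "k'+1" "gg x"] k' by simp
    show ?thesis
    proof (cases "i = 1")
      case True
      have pv: "Pk x k i = mxx (gg x) (k-1) - gg x k" using True by (simp add: Pk_def)
      have "(\<Sum>j=1..l!(k-1). W3 k i j * ?R j) = (\<Sum>j=1..l!(k-1). (dl 1 j + dl 2 j - dl 3 j - dl 4 j + dl 5 j) * ?R j)"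
        unfolding W3_def using True by simp
      also have "\<dots> = ?R 1 + ?R 2 - ?R 3 - ?R 4 + ?R 5"
        by (rule sum_dl5) (use lkm assms in simp)
      also have "\<dots> = mxx (gg x) (k-1) - gg x k"
      proof -
        have v: "Pk x (k-1) 1 = mxx (gg x) (k-2) - gg x (k-1)" "Pk x (k-1) 2 = gg x (k-1)"
          "Pk x (k-1) 3 = - gg x (k-1)" "Pk x (k-1) 4 = gg x k" "Pk x (k-1) 5 = - gg x k"
        proof -
          have f1: "5 \<le> 2*n+3-2*(k-1)" using assms by arith
          have f2: "k - 1 - 1 = k - 2" "(2::nat) div 2 + (k-1) - 1 = k-1" "(3::nat) div 2 + (k-1) - 1 = k-1"
            "(4::nat) div 2 + (k-1) - 1 = k" "(5::nat) div 2 + (k-1) - 1 = k" using assms by auto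
          show "Pk x (k-1) 1 = mxx (gg x) (k-2) - gg x (k-1)" "Pk x (k-1) 2 = gg x (k-1)"
          "Pk x (k-1) 3 = - gg x (k-1)" "Pk x (k-1) 4 = gg x k" "Pk x (k-1) 5 = - gg x k"
            unfolding Pk_def f2 using f1 by auto
        qed
        show ?thesis unfolding v mx by (rule relu5)
      qed
      finally show ?thesis using lay pv by linarith
    next
      case False
      show ?thesis
      proof (cases "2 \<le> i \<and> i \<le> 2*n+3-2*k")
        case r: True
        define q where "q = i div 2"
        have q: "i = 2*q \<or> i = 2*q+1" unfolding q_def by presburger
        show ?thesis
        proof (cases "i = 2*q")
          case True
          have pv: "Pk x k i = gg x (i div 2 + k - 1)" using True r by (simp add: Pk_def)
          have ib: "i + 3 \<le> 2*n+3-2*(k-1)" using r True assms by presburger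
          have "(\<Sum>j=1..l!(k-1). W3 k i j * ?R j) = (\<Sum>j=1..l!(k-1). (dl (i+2) j - dl (i+3) j) * ?R j)"
            unfolding W3_def using True r False by simp
          also have "\<dots> = ?R (i+2) - ?R (i+3)"
          proof (rule sum_dl2)
            show "i + 3 \<in> {1..l!(k-1)}" "i + 2 \<in> {1..l!(k-1)}" using lkm ib by auto
          qed
          also have "\<dots> = gg x (i div 2 + k - 1)"
            unfolding Pk_def using assms k' r True relu_id ib by simp
          finally show ?thesis using lay pv by linarith
        next
          case f3: False
          then have i: "i = 2*q+1" using q by simp
          have pv: "Pk x k i = - gg x (i div 2 + k - 1)" using i r by (simp add: Pk_def)
          have ib: "i + 2 \<le> 2*n+3-2*(k-1)" using r i assms by presburger
          have "(\<Sum>j=1..l!(k-1). W3 k i j * ?R j) = (\<Sum>j=1..l!(k-1). (dl (i+2) j - dl (i+1) j) * ?R j)"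
            unfolding W3_def using i r False by simp
          also have "\<dots> = ?R (i+2) - ?R (i+1)"
            by (rule sum_dl2) (use lkm ib r i in auto)
          also have "\<dots> = - gg x (i div 2 + k - 1)"
          proof -
            have e1: "(i+2) div 2 + (k-1) - 1 = i div 2 + k - 1" "(i+1) div 2 + (k-1) - 1 = i div 2 + k - 1"
              using i assms by auto
            have c1: "2 \<le> i + 2 \<and> i + 2 \<le> 2*n+3-2*(k-1)" "2 \<le> i + 1 \<and> i + 1 \<le> 2*n+3-2*(k-1)"
              using ib i by auto
            have "Pk x (k-1) (i+2) = - gg x (i div 2 + k - 1)" unfolding Pk_def e1 using c1 i by simp
            moreover have "Pk x (k-1) (i+1) = gg x (i div 2 + k - 1)" unfolding Pk_def e1 using c1 i by simp
            ultimately show ?thesis using relu_id[of "gg x (i div 2 + k - 1)"] by simp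
          qed
          finally show ?thesis using lay pv by linarith
        qed
      next
        case f2: False
        have c: "i \<noteq> 1" "\<not> (2 \<le> i \<and> i \<le> 2*n+3-2*k)" using False f2 by auto
        have "\<And>j. W3 k i j = 0" unfolding W3_def by (simp only: c if_False)
        then have "(\<Sum>j=1..l!(k-1). W3 k i j * ?R j) = 0" by simp
        moreover have "Pk x k i = 0" unfolding Pk_def by (simp only: c if_False)
        ultimately show ?thesis using lay by linarith
      qed
    qed
  qed
qed



lemma relu3: "max (A-G) 0 + max G 0 - max (-G) 0 = max A (G::real)"
  by (simp add: max_def)

lemma layn1: "lay (n+1) (reluR (l!n) (Pk x n)) = Q x (n+1)"
proof
  fix i
  let ?R = "\<lambda>j. max (Pk x n j) 0"
  have ln: "l!n \<ge> 3" using lk n2 by force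
  have lpn: "l!(n+1) \<ge> 1" using lpos LLn by auto
  have S: "(\<Sum>j=1..l!n. Wn1 i j * reluR (l!n) (Pk x n) j) = (\<Sum>j=1..l!n. Wn1 i j * ?R j)"
    by (rule sum.cong) (auto simp: reluR_def)
  have v: "Pk x n 1 = mxx (gg x) (n-1) - gg x n" "Pk x n 2 = gg x n" "Pk x n 3 = - gg x n"
  proof -
    have f2: "(2::nat) div 2 + n - 1 = n" "(3::nat) div 2 + n - 1 = n" using n2 by auto
    show "Pk x n 1 = mxx (gg x) (n-1) - gg x n" "Pk x n 2 = gg x n" "Pk x n 3 = - gg x n"
      unfolding Pk_def f2 by auto
  qed
  have mx: "mxx (gg x) n = max (mxx (gg x) (n-1)) (gg x n)"
    using mxx_Suc[of "n-1" "gg x"] n2 by simp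
  show "lay (n+1) (reluR (l!n) (Pk x n)) i = Q x (n+1) i"
  proof (cases "i \<in> {1..l!(n+1)}")
    case False
    then show ?thesis using lpn unfolding lay_def Q_def by auto
  next
    case True
    have lay: "lay (n+1) (reluR (l!n) (Pk x n)) i = (\<Sum>j=1..l!n. Wn1 i j * ?R j)"
      using True S n2 unfolding lay_def WW_def BB_def by simp
    show ?thesis
    proof (cases "i = 1")
      case True
      have pv: "Q x (n+1) i = mxx (gg x) n" using True by (simp add: Q_def)
      have "(\<Sum>j=1..l!n. Wn1 i j * ?R j) = (\<Sum>j=1..l!n. (dl 1 j + dl 2 j - dl 3 j) * ?R j)"
        unfolding Wn1_def using True by simp
      also have "\<dots> = ?R 1 + ?R 2 - ?R 3" by (rule sum_dl3) (use ln in simp)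
      also have "\<dots> = mxx (gg x) n" unfolding v mx by (rule relu3)
      finally show ?thesis using lay pv by linarith
    next
      case False
      show ?thesis
      proof (cases "i = 2")
        case True
        have pv: "Q x (n+1) i = - mxx (gg x) n" using True \<open>i \<in> {1..l!(n+1)}\<close> by (auto simp: Q_def)
        have "(\<Sum>j=1..l!n. Wn1 i j * ?R j) = (\<Sum>j=1..l!n. (dl 3 j - dl 1 j - dl 2 j) * ?R j)"
          unfolding Wn1_def using True by simp
        also have "\<dots> = ?R 3 - ?R 1 - ?R 2" by (rule sum_dl3') (use ln in simp)
        also have "\<dots> = - mxx (gg x) n" unfolding v mx using relu3[of "mxx (gg x) (n-1)" "gg x n"] by linarith
        finally show ?thesis using lay pv by linarith
      next
        case f2: False
        have "\<And>j. Wn1 i j = 0" using False f2 unfolding Wn1_def by simp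
        then have "(\<Sum>j=1..l!n. Wn1 i j * ?R j) = 0" by simp
        moreover have "Q x (n+1) i = 0" using False f2 unfolding Q_def by simp
        ultimately show ?thesis using lay by simp
      qed
    qed
  qed
qed

lemma layl:
  assumes "n + 2 \<le> k" "k \<le> LL"
  shows "lay k (reluR (l!(k-1)) (Q x (k-1))) = Q x k"
proof
  fix i
  let ?R = "\<lambda>j. max (Q x (k-1) j) 0"
  have "n < k - 1" "k - 1 < LL" using assms by auto
  then have lk1: "l!(k-1) \<ge> 2" using lbig by blast
  have lpk: "l!k \<ge> 1" using lpos assms by auto
  have S: "(\<Sum>j=1..l!(k-1). Wl i j * reluR (l!(k-1)) (Q x (k-1)) j) = (\<Sum>j=1..l!(k-1). Wl i j * ?R j)"
    by (rule sum.cong) (auto simp: reluR_def)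
  have v: "Q x (k-1) 1 = mxx (gg x) n" "Q x (k-1) 2 = - mxx (gg x) n" unfolding Q_def using lk1 by auto
  show "lay k (reluR (l!(k-1)) (Q x (k-1))) i = Q x k i"
  proof (cases "i \<in> {1..l!k}")
    case False
    then show ?thesis using lpk unfolding lay_def Q_def by auto
  next
    case True
    have lay: "lay k (reluR (l!(k-1)) (Q x (k-1))) i = (\<Sum>j=1..l!(k-1). Wl i j * ?R j)"
      using True S n2 assms unfolding lay_def WW_def BB_def by simp
    show ?thesis
    proof (cases "i = 1")
      case True
      have pv: "Q x k i = mxx (gg x) n" using True by (simp add: Q_def)
      have "(\<Sum>j=1..l!(k-1). Wl i j * ?R j) = (\<Sum>j=1..l!(k-1). (dl 1 j - dl 2 j) * ?R j)"
        unfolding Wl_def using True by simp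
      also have "\<dots> = ?R 1 - ?R 2" by (rule sum_dl2) (use lk1 in auto)
      also have "\<dots> = mxx (gg x) n" unfolding v by (rule relu_id)
      finally show ?thesis using lay pv by linarith
    next
      case False
      show ?thesis
      proof (cases "i = 2")
        case True
        have pv: "Q x k i = - mxx (gg x) n" using True \<open>i \<in> {1..l!k}\<close> by (auto simp: Q_def)
        have "(\<Sum>j=1..l!(k-1). Wl i j * ?R j) = (\<Sum>j=1..l!(k-1). (dl 2 j - dl 1 j) * ?R j)"
          unfolding Wl_def using True by simp
        also have "\<dots> = ?R 2 - ?R 1" by (rule sum_dl2) (use lk1 in auto)
        also have "\<dots> = - mxx (gg x) n" unfolding v using relu_id[of "mxx (gg x) n"] by linarith
        finally show ?thesis using lay pv by linarith
      next
        case f2: False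
        have "\<And>j. Wl i j = 0" using False f2 unfolding Wl_def by simp
        then have "(\<Sum>j=1..l!(k-1). Wl i j * ?R j) = 0" by simp
        moreover have "Q x k i = 0" using False f2 unfolding Q_def by simp
        ultimately show ?thesis using lay by simp
      qed
    qed
  qed
qed

definition thOK :: "(nat \<Rightarrow> real) \<Rightarrow> bool" where
  "thOK \<theta> \<longleftrightarrow> (\<forall>k\<in>{1..LL}. \<forall>i\<in>{1..l!k}. (\<forall>j\<in>{1..l!(k-1)}. \<theta> (sArch l (k-1) + (i-1)*l!(k-1) + j) = WW k i j)
           \<and> \<theta> (sArch l (k-1) + l!k * l!(k-1) + i) = BB k i)"

lemma affine_lay:
  assumes "thOK \<theta>" "k \<in> {1..LL}"
  shows "affineA \<theta> (sArch l (k-1)) (l!k) (l!(k-1)) y = lay k y"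
proof
  fix i
  have th: "\<forall>i\<in>{1..l!k}. (\<forall>j\<in>{1..l!(k-1)}. \<theta> (sArch l (k-1) + (i-1)*l!(k-1) + j) = WW k i j)
           \<and> \<theta> (sArch l (k-1) + l!k * l!(k-1) + i) = BB k i" using assms unfolding thOK_def by blast
  show "affineA \<theta> (sArch l (k-1)) (l!k) (l!(k-1)) y i = lay k y i"
  proof (cases "i \<in> {1..l!k}")
    case True
    have t1: "\<forall>j\<in>{1..l!(k-1)}. \<theta> (sArch l (k-1) + (i-1)*l!(k-1) + j) = WW k i j" using th True by blast
    have "(\<Sum>j=1..l!(k-1). \<theta> (sArch l (k-1) + (i-1)*l!(k-1) + j) * y j) = (\<Sum>j=1..l!(k-1). WW k i j * y j)"
      by (rule sum.cong[OF refl]) (metis t1)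
    moreover have "\<theta> (sArch l (k-1) + l!k * l!(k-1) + i) = BB k i" using th True by blast
    moreover have "affineA \<theta> (sArch l (k-1)) (l!k) (l!(k-1)) y i = (\<Sum>j=1..l!(k-1). \<theta> (sArch l (k-1) + (i-1)*l!(k-1) + j) * y j) + \<theta> (sArch l (k-1) + l!k * l!(k-1) + i)"
      using True unfolding affineA_def by (simp only: if_True)
    moreover have "lay k y i = (\<Sum>j=1..l!(k-1). WW k i j * y j) + BB k i"
      using True unfolding lay_def by (simp only: if_True)
    ultimately show ?thesis by simp
  next
    case False
    have "affineA \<theta> (sArch l (k-1)) (l!k) (l!(k-1)) y i = 0" using False unfolding affineA_def by (simp only: if_False)
    moreover have "lay k y i = 0" using False unfolding lay_def by (simp only: if_False)
    ultimately show ?thesis by simp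
  qed
qed

lemma netPre_Suc: "k \<ge> 1 \<Longrightarrow> netPre \<theta> l (Suc k) x = affineA \<theta> (sArch l k) (l ! Suc k) (l ! k) (reluR (l ! k) (netPre \<theta> l k x))"
  by (cases k) auto

lemma net_main:
  assumes "thOK \<theta>"
  shows "netPre \<theta> l LL x 1 = mxx (gg x) n"
proof -
  have n1: "netPre \<theta> l 1 x = P1 x"
  proof -
    have "netPre \<theta> l 1 x = affineA \<theta> (sArch l (1-1)) (l!1) (l!(1-1)) x" by (simp add: sArch_def)
    also have "\<dots> = lay 1 x" by (rule affine_lay) (use assms LLn in auto)
    finally show ?thesis using lay1 by simp
  qed
  have stp: "netPre \<theta> l (Suc k) x = lay (Suc k) (reluR (l!k) (netPre \<theta> l k x))" if "1 \<le> k" "k < LL" for k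
    using netPre_Suc[OF that(1)] affine_lay[OF assms, of "Suc k"] that by simp
  have n2': "netPre \<theta> l 2 x = Pk x 2"
  proof -
    have "netPre \<theta> l 2 x = lay 2 (reluR (l!1) (netPre \<theta> l 1 x))"
      using stp[of 1] LLn n2 by (simp del: netPre.simps add: numeral_2_eq_2)
    also have "\<dots> = lay 2 (reluR (l!1) (P1 x))" using n1 by simp
    also have "\<dots> = Pk x 2" by (rule lay2)
    finally show ?thesis .
  qed
  have nk: "2 + m \<le> n \<Longrightarrow> netPre \<theta> l (2 + m) x = Pk x (2 + m)" for m
  proof (induction m)
    case 0 then show ?case using n2' by simp
  next
    case (Suc m)
    have "netPre \<theta> l (2 + Suc m) x = netPre \<theta> l (Suc (2 + m)) x" by (simp del: netPre.simps)
    also have "\<dots> = lay (Suc (2 + m)) (reluR (l!(2+m)) (netPre \<theta> l (2+m) x))"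
      by (rule stp) (use Suc.prems LLn in auto)
    also have "\<dots> = lay (Suc (2 + m)) (reluR (l!(Suc (2+m) - 1)) (Pk x (Suc (2+m) - 1)))"
      using Suc by (simp del: netPre.simps)
    also have "\<dots> = Pk x (Suc (2 + m))" by (rule lay3) (use Suc.prems in auto)
    finally show ?case by (simp del: netPre.simps)
  qed
  have nn1: "netPre \<theta> l (n+1) x = Q x (n+1)"
  proof -
    have "netPre \<theta> l (n+1) x = lay (Suc n) (reluR (l!n) (netPre \<theta> l n x))"
      using stp[of n] n2 LLn by (simp del: netPre.simps)
    also have "netPre \<theta> l n x = Pk x n"
    proof -
      have e: "2 + (n - 2) = n" using n2 by simp
      show ?thesis using nk[of "n-2", unfolded e] by simp
    qed
    finally show ?thesis using layn1 by simp
  qed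
  have nq: "n + 1 + m \<le> LL \<Longrightarrow> netPre \<theta> l (n + 1 + m) x = Q x (n + 1 + m)" for m
  proof (induction m)
    case 0 then show ?case using nn1 by simp
  next
    case (Suc m)
    have "netPre \<theta> l (n + 1 + Suc m) x = netPre \<theta> l (Suc (n + 1 + m)) x" by (simp del: netPre.simps)
    also have "\<dots> = lay (Suc (n + 1 + m)) (reluR (l!(n + 1 + m)) (netPre \<theta> l (n + 1 + m) x))"
      by (rule stp) (use Suc.prems in auto)
    also have "\<dots> = lay (Suc (n + 1 + m)) (reluR (l!(Suc (n + 1 + m) - 1)) (Q x (Suc (n + 1 + m) - 1)))"
      using Suc by (simp del: netPre.simps)
    also have "\<dots> = Q x (Suc (n + 1 + m))" by (rule layl) (use Suc.prems in auto)
    finally show ?case by (simp del: netPre.simps)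
  qed
  have "netPre \<theta> l LL x = Q x LL" using nq[of "LL - (n+1)"] LLn by simp
  then show ?thesis unfolding Q_def by simp
qed

end

lemma clip_le:
  fixes u v :: ereal and a y :: real
  assumes "u \<le> ereal a" "ereal a \<le> v"
  shows "\<bar>a - real_of_ereal (max u (min (ereal y) v))\<bar> \<le> \<bar>a - y\<bar>"
proof (cases u)
  case (real u')
  then show ?thesis
  proof (cases v)
    case (real v')
    have "u' \<le> a" "a \<le> v'" using assms \<open>u = ereal u'\<close> real by auto
    moreover have "max u (min (ereal y) v) = ereal (max u' (min y v'))" using \<open>u = ereal u'\<close> real by simp
    ultimately show ?thesis by (simp add: max_def min_def abs_if)
  next
    case PInf
    have "u' \<le> a" using assms \<open>u = ereal u'\<close> by auto
    moreover have "max u (min (ereal y) v) = ereal (max u' y)" using \<open>u = ereal u'\<close> PInf by simp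
    ultimately show ?thesis by (simp add: max_def abs_if)
  next
    case MInf
    then show ?thesis using assms by simp
  qed
next
  case PInf
  then show ?thesis using assms by simp
next
  case MInf
  then show ?thesis
  proof (cases v)
    case (real v')
    have "a \<le> v'" using assms real by auto
    moreover have "max u (min (ereal y) v) = ereal (min y v')" using MInf real by simp
    ultimately show ?thesis by (simp add: min_def abs_if)
  next
    case PInf
    have "max u (min (ereal y) v) = ereal y" using MInf PInf by simp
    then show ?thesis by simp
  next
    case MInf
    then show ?thesis using assms by simp
  qed
qed


theorem corollary3p8:
  fixes d dd LL :: nat and L :: real and u v :: ereal
    and D :: "(nat \<Rightarrow> real) set" and f :: "(nat \<Rightarrow> real) \<Rightarrow> real"
    and M :: "(nat \<Rightarrow> real) set" and l :: "nat list"
  assumes "d \<ge> 1" and "dd \<ge> 1" and "LL \<ge> 1"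
    and "u < \<infinity>" and "u < v"
    and "\<forall>x\<in>D. is_vec d x"
    and "\<forall>x\<in>D. u \<le> ereal (f x) \<and> ereal (f x) \<le> v"
    and "\<forall>x\<in>D. \<forall>y\<in>D. \<bar>f x - f y\<bar> \<le> L * (\<Sum>i=1..d. \<bar>x i - y i\<bar>)"
    and "M \<subseteq> D" and "finite M" and "card M \<ge> 2"
    and "length l = LL + 1" and "\<forall>i\<le>LL. l ! i \<ge> 1"
    and "LL \<ge> card M + 1"
    and "sArch l LL \<le> dd"
    and "l ! 0 = d" and "l ! LL = 1"
    and "l ! 1 \<ge> 2 * d * card M"
    and "\<forall>k\<in>{2..card M}. int (l ! k) \<ge> 2 * int (card M) - 2 * int k + 3"
    and "\<forall>i. card M < i \<and> i < LL \<longrightarrow> l ! i \<ge> 2"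
  shows "\<exists>\<theta> :: nat \<Rightarrow> real.
     (\<forall>i\<in>{1..dd}. \<bar>\<theta> i\<bar> \<le> max 1 (max L (max (Max (linf d ` M)) (2 * Max ((\<lambda>z. \<bar>f z\<bar>) ` M)))))
   \<and> (SUP x\<in>D. ereal \<bar>f x - realNN \<theta> l u v x 1\<bar>)
       \<le> ereal (2 * L) * (SUP x\<in>D. (INF y\<in>M. ereal (\<Sum>i=1..d. \<bar>x i - y i\<bar>)))"
proof -
  note A = assms
  define n where "n = card M"
  have n2: "n \<ge> 2" using assms(11) unfolding n_def by simp
  obtain h where h: "bij_betw h {0..<n} M" using ex_bij_betw_nat_finite[OF assms(10)] unfolding n_def by blast
  define z where "z t = h (t - 1)" for t
  have zM: "z t \<in> M" if "t \<in> {1..n}" for t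
    using h that unfolding z_def bij_betw_def by auto
  have zsurj: "\<exists>t\<in>{1..n}. y = z t" if "y \<in> M" for y
  proof -
    have "y \<in> h ` {0..<n}" using h that by (simp add: bij_betw_def)
    then obtain t0 where "t0 \<in> {0..<n}" "y = h t0" by blast
    then show ?thesis unfolding z_def by (intro bexI[of _ "t0 + 1"]) auto
  qed
  have L0: "L \<ge> 0"
  proof -
    obtain y1 y2 where y: "y1 \<in> M" "y2 \<in> M" "y1 \<noteq> y2"
    proof -
      have "\<not> (card M \<le> Suc 0)" using assms(11) by simp
      then have "\<not> (\<forall>a1\<in>M. \<forall>a2\<in>M. a1 = a2)" using card_le_Suc0_iff_eq[OF assms(10)] by simp
      then obtain y1 y2 where "y1 \<in> M" "y2 \<in> M" "y1 \<noteq> y2" by blast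
      then show ?thesis using that by blast
    qed
    have v: "is_vec d y1" "is_vec d y2" using y assms(6,9) by auto
    have "\<exists>i\<in>{1..d}. y1 i \<noteq> y2 i"
    proof (rule ccontr)
      assume "\<not> ?thesis"
      then have "y1 = y2" using v unfolding is_vec_def by (intro ext) (metis)
      then show False using y by simp
    qed
    then obtain i0 where i0: "i0 \<in> {1..d}" "y1 i0 \<noteq> y2 i0" by blast
    have "0 < \<bar>y1 i0 - y2 i0\<bar>" using i0 by simp
    also have "\<dots> \<le> (\<Sum>i=1..d. \<bar>y1 i - y2 i\<bar>)" by (rule member_le_sum) (use i0 in auto)
    finally have S: "0 < (\<Sum>i=1..d. \<bar>y1 i - y2 i\<bar>)" .
    have "0 \<le> L * (\<Sum>i=1..d. \<bar>y1 i - y2 i\<bar>)"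
      using assms(8) y assms(9) by (meson abs_ge_zero order_trans subsetD)
    then show ?thesis using S by (simp add: zero_le_mult_iff)
  qed
  define b where "b = max 1 (max L (max (Max (linf d ` M)) (2 * Max ((\<lambda>z. \<bar>f z\<bar>) ` M))))"
  have lk': "\<forall>k\<in>{2..n}. l!k \<ge> 2*n+3-2*k"
  proof
    fix k assume k: "k \<in> {2..n}"
    then have "int (l ! k) \<ge> 2 * int n - 2 * int k + 3" using assms(19) unfolding n_def by blast
    moreover have "int (2*n+3-2*k) = 2 * int n - 2 * int k + 3" using k by auto
    ultimately show "l!k \<ge> 2*n+3-2*k" by linarith
  qed
  interpret N: netw d n LL l L z "\<lambda>t. f (z t)"
    by unfold_locales (use assms lk' n2 in \<open>auto simp: n_def\<close>)
  obtain \<theta> where th1: "\<forall>p. \<theta> p = 0 \<or> (\<exists>k i j. \<theta> p = N.WW k i j) \<or> (\<exists>k i. \<theta> p = N.BB k i)"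
    and th2: "\<forall>k\<in>{1..LL}. \<forall>i\<in>{1..l!k}. (\<forall>j\<in>{1..l!(k-1)}. \<theta> (sArch l (k-1) + (i-1)*l!(k-1) + j) = N.WW k i j)
           \<and> \<theta> (sArch l (k-1) + l!k * l!(k-1) + i) = N.BB k i"
    using theta_exists[where W = N.WW and B = N.BB and LL = LL and l = l] by blast
  have thOK: "N.thOK \<theta>" unfolding N.thOK_def using th2 by blast
  have b1: "1 \<le> b" "L \<le> b" unfolding b_def by auto
  have bz: "\<forall>t\<in>{1..n}. \<forall>c\<in>{1..d}. \<bar>z t c\<bar> \<le> b"
  proof (intro ballI)
    fix t c assume t: "t \<in> {1..n}" and c: "c \<in> {1..d}"
    have "\<bar>z t c\<bar> \<le> linf d (z t)" unfolding linf_def by (rule Max_ge) (use c in auto)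
    also have "\<dots> \<le> Max (linf d ` M)" by (rule Max_ge) (use zM[OF t] assms(10) in auto)
    also have "\<dots> \<le> b" unfolding b_def by auto
    finally show "\<bar>z t c\<bar> \<le> b" .
  qed
  have bf: "\<forall>t\<in>{1..n}. 2 * \<bar>f (z t)\<bar> \<le> b"
  proof
    fix t assume t: "t \<in> {1..n}"
    have "\<bar>f (z t)\<bar> \<le> Max ((\<lambda>z. \<bar>f z\<bar>) ` M)" by (rule Max_ge) (use zM[OF t] assms(10) in auto)
    then have "2 * \<bar>f (z t)\<bar> \<le> 2 * Max ((\<lambda>z. \<bar>f z\<bar>) ` M)" by simp
    also have "\<dots> \<le> b" unfolding b_def by auto
    finally show "2 * \<bar>f (z t)\<bar> \<le> b" .
  qed
  have bnd: "\<bar>\<theta> p\<bar> \<le> b" for p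
    using th1[rule_format, of p] N.bounds[OF b1(1) L0 b1(2) bz bf] b1 by auto
  have err: "ereal \<bar>f x - realNN \<theta> l u v x 1\<bar> \<le> ereal (2 * L) * (INF y\<in>M. ereal (\<Sum>i=1..d. \<bar>x i - y i\<bar>))"
    if x: "x \<in> D" for x
  proof -
    let ?m = "mxx (N.gg x) n"
    have r: "realNN \<theta> l u v x 1 = real_of_ereal (max u (min (ereal ?m) v))"
      unfolding realNN_def clipC_def using N.net_main[OF thOK, of x] assms(12,17) by simp
    have up: "?m \<le> f x"
    proof -
      obtain t where t: "t \<in> {1..n}" "?m = N.gg x t" using mxx_in[of n "N.gg x"] n2 by auto
      have "\<bar>f x - f (z t)\<bar> \<le> L * N.nrm x t" unfolding N.nrm_def
        using assms(8) x zM[OF t(1)] assms(9) by blast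
      then show ?thesis using t unfolding N.gg_def by simp
    qed
    have lo: "f x - ?m \<le> 2 * L * N.nrm x t" if t: "t \<in> {1..n}" for t
    proof -
      have "N.gg x t \<le> ?m" by (rule mxx_ge) (use t in auto)
      moreover have "\<bar>f x - f (z t)\<bar> \<le> L * N.nrm x t" unfolding N.nrm_def
        using assms(8) x zM[OF t] assms(9) by blast
      ultimately show ?thesis unfolding N.gg_def by simp
    qed
    have fin: "finite ((\<lambda>y. ereal (\<Sum>i=1..d. \<bar>x i - y i\<bar>)) ` M)" using assms(10) by simp
    have ne: "(\<lambda>y. ereal (\<Sum>i=1..d. \<bar>x i - y i\<bar>)) ` M \<noteq> {}" using assms(11) by auto
    have "Min ((\<lambda>y. ereal (\<Sum>i=1..d. \<bar>x i - y i\<bar>)) ` M) \<in> (\<lambda>y. ereal (\<Sum>i=1..d. \<bar>x i - y i\<bar>)) ` M"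
      by (rule Min_in[OF fin ne])
    then obtain y0 where y0: "y0 \<in> M" "(INF y\<in>M. ereal (\<Sum>i=1..d. \<bar>x i - y i\<bar>)) = ereal (\<Sum>i=1..d. \<bar>x i - y0 i\<bar>)"
      using Min_Inf[OF fin ne] by auto
    obtain t0 where t0: "t0 \<in> {1..n}" "y0 = z t0" using zsurj[OF y0(1)] by blast
    have fx: "u \<le> ereal (f x)" "ereal (f x) \<le> v" using assms(7) x by auto
    have "\<bar>f x - realNN \<theta> l u v x 1\<bar> \<le> \<bar>f x - ?m\<bar>" unfolding r by (rule clip_le[OF fx])
    also have "\<dots> \<le> 2 * L * N.nrm x t0" using up lo[OF t0(1)] by simp
    finally have "ereal \<bar>f x - realNN \<theta> l u v x 1\<bar> \<le> ereal (2 * L) * ereal (N.nrm x t0)" by simp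
    also have "ereal (N.nrm x t0) = (INF y\<in>M. ereal (\<Sum>i=1..d. \<bar>x i - y i\<bar>))"
      unfolding y0(2) t0(2) N.nrm_def by simp
    finally show ?thesis .
  qed
  have "(SUP x\<in>D. ereal \<bar>f x - realNN \<theta> l u v x 1\<bar>) \<le> ereal (2 * L) * (SUP x\<in>D. (INF y\<in>M. ereal (\<Sum>i=1..d. \<bar>x i - y i\<bar>)))"
  proof (rule SUP_least)
    fix x assume x: "x \<in> D"
    have "ereal \<bar>f x - realNN \<theta> l u v x 1\<bar> \<le> ereal (2 * L) * (INF y\<in>M. ereal (\<Sum>i=1..d. \<bar>x i - y i\<bar>))"
      by (rule err[OF x])
    also have "\<dots> \<le> ereal (2 * L) * (SUP x\<in>D. (INF y\<in>M. ereal (\<Sum>i=1..d. \<bar>x i - y i\<bar>)))"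
      by (rule ereal_mult_left_mono) (use x L0 in \<open>auto intro: SUP_upper\<close>)
    finally show "ereal \<bar>f x - realNN \<theta> l u v x 1\<bar> \<le> ereal (2 * L) * (SUP x\<in>D. (INF y\<in>M. ereal (\<Sum>i=1..d. \<bar>x i - y i\<bar>)))" .
  qed
  moreover have "\<forall>i\<in>{1..dd}. \<bar>\<theta> i\<bar> \<le> b" using bnd by blast
  ultimately show ?thesis unfolding b_def by blast
qed

end
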